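(* Let $n\ge2$ and let $X_1,\dots,X_n$ be operators in a complex Hilbert space $\mathcal{H}$, each Hermitian or skew-Hermitian, defined on a common invariant domain $D$. Let $m$ be a sequence of positive numbers satisfying (A0), (A1), (A2) and (A3'): there is $L\ge1$ with $p\,m_{p-1}\le L\,m_p$ for all $p\ge1$; set $m^{(1)}=\dots=m^{(n)}=m$, $\mathbf{m}=(m,\dots,m)$ ($n$ entries), $\mathbf{m}'=(m,\dots,m)$ ($n-1$ entries), $\mathbf{X}=(X_1,\dots,X_n)$, $\mathbf{X}'=(X_1,\dots,X_{n-1})$. If $[X_j,X_n]\in\mathrm{span}\{X_1,\dots,X_n\}$ (on $D$) for every $j\in\{1,\dots,n-1\}$, then $u\in D$ belongs to $\mathcal{S}_{\mathbf{m}}(\mathbf{X})$ if and only if $u\in\mathcal{S}_{\mathbf{m}'}(\mathbf{X}')\cap\mathcal{S}_m(X_n)$.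
   Context: A common invariant domain $D$ means $D\subset\mathrm{Dom}(X_j)$ and $X_jD\subset D$ for all $j$. Notation: for $N\ge1$, $M(N)=\bigcup_{k\ge1}\{1,\dots,N\}^k$; for $\alpha=(i_1,\dots,i_k)$, $|\alpha|=k$, $|\alpha|_j=\mathrm{card}\{l:i_l=j\}$. For operators $\mathbf{Y}=(Y_1,\dots,Y_N)$, $\mathbf{Y}_\alpha=Y_{i_1}\cdots Y_{i_k}$ and $C^\infty(\mathbf{Y})=\{u: u\in\mathrm{Dom}(\mathbf{Y}_\alpha)\ \forall\alpha\in M(N)\}$. For sequences $\mathbf{p}=(p^{(1)},\dots,p^{(N)})$, $\mathbf{p}_\alpha=p^{(1)}_{|\alpha|_1}\cdots p^{(N)}_{|\alpha|_N}$ and $\mathcal{S}_{\mathbf{p}}(\mathbf{Y})=\{u\in C^\infty(\mathbf{Y}):\exists A,C>0,\ \|\mathbf{Y}_\alpha u\|\le CA^{|\alpha|}\mathbf{p}_\alpha\ \forall\alpha\in M(N)\}$ (for a single operator $Y$ and sequence $m$: $\|Y^ku\|\le CA^km_k$ for all $k\ge1$). Conditions: (A0) $m_0=m_1=1$; (A1) $m_p^2\le m_{p-1}m_{p+1}$ for $p\ge1$; (A2) there is $H>0$ with $m_{p+q}\le H^{p+q}m_pm_q$ for all $p,q\in\mathbb{N}$. *)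

theory Defs
  imports "HOL-Analysis.Analysis"
begin

class complex_inner = real_normed_vector +
  fixes scaleC :: "complex \<Rightarrow> 'a \<Rightarrow> 'a" (infixr \<open>*\<^sub>C\<close> 75)
    and cinner :: "'a \<Rightarrow> 'a \<Rightarrow> complex"
  assumes scaleC_add_right: "a *\<^sub>C (x + y) = a *\<^sub>C x + a *\<^sub>C y"
    and scaleC_add_left: "(a + b) *\<^sub>C x = a *\<^sub>C x + b *\<^sub>C x"
    and scaleC_scaleC: "a *\<^sub>C (b *\<^sub>C x) = (a * b) *\<^sub>C x"
    and scaleC_one: "1 *\<^sub>C x = x"
    and scaleR_scaleC: "scaleR r x = complex_of_real r *\<^sub>C x"
    and cinner_commute: "cinner x y = cnj (cinner y x)"
    and cinner_add_left: "cinner (x + y) z = cinner x z + cinner y z"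
    and cinner_scaleC_left: "cinner (a *\<^sub>C x) y = cnj a * cinner x y"
    and cinner_self_norm: "cinner x x = complex_of_real ((norm x)\<^sup>2)"

class chilbert_space = complex_inner + complete_space

fun opword :: "(nat \<Rightarrow> 'a \<Rightarrow> 'a) \<Rightarrow> nat list \<Rightarrow> 'a \<Rightarrow> 'a" where
  "opword Y [] u = u"
| "opword Y (i # is) u = Y i (opword Y is u)"

definition multi_indices :: "nat \<Rightarrow> nat list set" where
  "multi_indices N = {\<alpha>. \<alpha> \<noteq> [] \<and> set \<alpha> \<subseteq> {1..N}}"

definition seq_weight :: "nat \<Rightarrow> (nat \<Rightarrow> nat \<Rightarrow> real) \<Rightarrow> nat list \<Rightarrow> real" where
  "seq_weight N p \<alpha> = (\<Prod>j=1..N. p j (count_list \<alpha> j))"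

text \<open>S_p(Y) for Y = (Y 1, ..., Y N), restricted to vectors in a common invariant
  domain (so that the C^\<infinity> condition is automatic).\<close>
definition S_class :: "nat \<Rightarrow> (nat \<Rightarrow> 'a::real_normed_vector \<Rightarrow> 'a) \<Rightarrow> (nat \<Rightarrow> nat \<Rightarrow> real) \<Rightarrow> 'a set" where
  "S_class N Y p = {u. \<exists>A>0. \<exists>C>0. \<forall>\<alpha>\<in>multi_indices N.
      norm (opword Y \<alpha> u) \<le> C * A ^ length \<alpha> * seq_weight N p \<alpha>}"

definition S_single :: "('a::real_normed_vector \<Rightarrow> 'a) \<Rightarrow> (nat \<Rightarrow> real) \<Rightarrow> 'a set" where
  "S_single Y m = {u. \<exists>A>0. \<exists>C>0. \<forall>k\<ge>1. norm ((Y ^^ k) u) \<le> C * A ^ k * m k}"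

definition complex_subspace :: "'a::complex_inner set \<Rightarrow> bool" where
  "complex_subspace D \<longleftrightarrow> 0 \<in> D \<and> (\<forall>x\<in>D. \<forall>y\<in>D. x + y \<in> D) \<and> (\<forall>c. \<forall>x\<in>D. c *\<^sub>C x \<in> D)"

definition linear_on :: "'a::complex_inner set \<Rightarrow> ('a \<Rightarrow> 'a) \<Rightarrow> bool" where
  "linear_on D X \<longleftrightarrow> (\<forall>x\<in>D. \<forall>y\<in>D. X (x + y) = X x + X y) \<and> (\<forall>c. \<forall>x\<in>D. X (c *\<^sub>C x) = c *\<^sub>C X x)"

definition hermitian_on :: "'a::complex_inner set \<Rightarrow> ('a \<Rightarrow> 'a) \<Rightarrow> bool" where
  "hermitian_on D X \<longleftrightarrow> (\<forall>x\<in>D. \<forall>y\<in>D. cinner (X x) y = cinner x (X y))"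

definition skew_hermitian_on :: "'a::complex_inner set \<Rightarrow> ('a \<Rightarrow> 'a) \<Rightarrow> bool" where
  "skew_hermitian_on D X \<longleftrightarrow> (\<forall>x\<in>D. \<forall>y\<in>D. cinner (X x) y = - cinner x (X y))"

end

theory Submission
  imports Defs
begin


lemma scaleC_zero_left [simp]: "(0::complex) *\<^sub>C (x::'a::complex_inner) = 0"
proof -
  have "(0::complex) *\<^sub>C x = (0+0) *\<^sub>C x" by simp
  also have "\<dots> = 0 *\<^sub>C x + 0 *\<^sub>C x" by (rule scaleC_add_left)
  finally show ?thesis by simp
qed

lemma scaleC_zero_right [simp]: "c *\<^sub>C (0::'a::complex_inner) = 0"
proof -
  have "c *\<^sub>C (0::'a) = c *\<^sub>C (0+0)" by simp
  also have "\<dots> = c *\<^sub>C 0 + c *\<^sub>C 0" by (rule scaleC_add_right)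
  finally show ?thesis by simp
qed

lemma scaleC_minus1: "(-1::complex) *\<^sub>C (x::'a::complex_inner) = - x"
  using scaleR_scaleC[of "-1" x] by simp

lemma scaleC_minus_left: "(- c) *\<^sub>C (x::'a::complex_inner) = - (c *\<^sub>C x)"
proof -
  have "(- c) *\<^sub>C x = (-1) *\<^sub>C (c *\<^sub>C x)" by (simp add: scaleC_scaleC)
  thus ?thesis by (simp add: scaleC_minus1)
qed

lemma scaleC_minus_right: "c *\<^sub>C (- (x::'a::complex_inner)) = - (c *\<^sub>C x)"
proof -
  have "c *\<^sub>C (- x) = c *\<^sub>C ((-1) *\<^sub>C x)" by (simp add: scaleC_minus1)
  also have "\<dots> = (-1) *\<^sub>C (c *\<^sub>C x)" by (simp add: scaleC_scaleC)
  finally show ?thesis by (simp add: scaleC_minus1)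
qed

lemma scaleC_diff_right: "c *\<^sub>C ((x::'a::complex_inner) - y) = c *\<^sub>C x - c *\<^sub>C y"
  unfolding diff_conv_add_uminus scaleC_add_right scaleC_minus_right ..

lemma scaleC_sum_right: "c *\<^sub>C (\<Sum>i\<in>I. f i) = (\<Sum>i\<in>I. c *\<^sub>C (f i :: 'a::complex_inner))"
  by (induction I rule: infinite_finite_induct) (auto simp: scaleC_add_right)

lemma scaleC_sum_left: "(\<Sum>i\<in>I. f i) *\<^sub>C (x::'a::complex_inner) = (\<Sum>i\<in>I. f i *\<^sub>C x)"
  by (induction I rule: infinite_finite_induct) (auto simp: scaleC_add_left)

lemma cinner_zero_left [simp]: "cinner 0 (y::'a::complex_inner) = 0"
  using cinner_add_left[of 0 0 y] by simp

lemma cinner_zero_right [simp]: "cinner (y::'a::complex_inner) 0 = 0"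
  using cinner_commute[of y 0] by simp

lemma cinner_add_right: "cinner (x::'a::complex_inner) (y + z) = cinner x y + cinner x z"
  using cinner_commute[of x "y+z"] cinner_commute[of x y] cinner_commute[of x z] cinner_add_left[of y z x]
  by simp

lemma cinner_scaleC_right: "cinner (x::'a::complex_inner) (a *\<^sub>C y) = a * cinner x y"
  using cinner_commute[of x "a *\<^sub>C y"] cinner_commute[of x y] cinner_scaleC_left[of a y x]
  by simp

lemma cinner_minus_left: "cinner (- (x::'a::complex_inner)) y = - cinner x y"
  using cinner_scaleC_left[of "-1" x y] by (simp add: scaleC_minus1)

lemma cinner_diff_left: "cinner ((x::'a::complex_inner) - z) y = cinner x y - cinner z y"
  unfolding diff_conv_add_uminus cinner_add_left cinner_minus_left ..

lemma cinner_sum_right: "cinner (x::'a::complex_inner) (\<Sum>i\<in>I. f i) = (\<Sum>i\<in>I. cinner x (f i))"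
  by (induction I rule: infinite_finite_induct) (auto simp: cinner_add_right)

lemma cinner_sum_list_right: "cinner (x::'a::complex_inner) (sum_list xs) = sum_list (map (cinner x) xs)"
  by (induction xs) (auto simp: cinner_add_right)

lemma cinner_self: "cinner (x::'a::complex_inner) x = complex_of_real ((norm x)^2)"
  by (rule cinner_self_norm)


lemma cauchy_schwarz_c: "norm (cinner (x::'a::complex_inner) y) \<le> norm x * norm y"
proof (cases "y = 0")
  case True then show ?thesis by simp
next
  case False
  define ny where "ny = (norm y)^2"
  have ny: "ny > 0" using False by (simp add: ny_def)
  define t where "t = cinner y x / complex_of_real ny"
  define v where "v = x - t *\<^sub>C y"
  have cyy: "cinner y y = complex_of_real ny" by (simp add: ny_def cinner_self)
  have cxy: "cinner x y = cnj (cinner y x)" by (rule cinner_commute)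
  have vv: "v = x + (- t) *\<^sub>C y" by (simp add: v_def scaleC_minus_left)
  have "cinner v v = cinner x x - cnj t * cinner y x - t * cinner x y + cnj t * t * cinner y y"
    unfolding vv cinner_add_left cinner_add_right cinner_scaleC_left cinner_scaleC_right
    by (simp add: algebra_simps)
  also have "\<dots> = cinner x x - cnj (cinner y x) * cinner y x / complex_of_real ny"
  proof -
    define z where "z = cinner y x"
    define r where "r = complex_of_real ny"
    have r0: "r \<noteq> 0" using ny by (simp add: r_def)
    have ct: "cnj t = cnj z / r" by (simp add: t_def z_def r_def)
    have tt: "t = z / r" by (simp add: t_def z_def r_def)
    have "cinner x x - cnj t * z - t * cnj z + cnj t * t * r = cinner x x - cnj z * z / r"
      unfolding ct tt using r0 by (simp add: field_simps power2_eq_square)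
    thus ?thesis unfolding z_def r_def cxy cyy .
  qed
  finally have e0: "cinner v v = cinner x x - cnj (cinner y x) * cinner y x / complex_of_real ny" .
  have zz: "cnj (cinner y x) * cinner y x = complex_of_real ((norm (cinner y x))^2)"
    using complex_norm_square[of "cinner y x"] by (simp add: mult.commute)
  have e: "cinner v v = complex_of_real ((norm x)^2 - (norm (cinner y x))^2 / ny)"
  proof -
    have "cinner v v = complex_of_real ((norm x)^2) - complex_of_real ((norm (cinner y x))^2) / complex_of_real ny"
      using e0 zz cinner_self[of x] by simp
    thus ?thesis by simp
  qed
  have "complex_of_real ((norm v)^2) = complex_of_real ((norm x)^2 - (norm (cinner y x))^2 / ny)"
    using e by (metis cinner_self)
  hence ee: "(norm v)^2 = (norm x)^2 - (norm (cinner y x))^2 / ny"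
    using of_real_eq_iff by blast
  have "0 \<le> (norm v)^2" by simp
  hence "0 \<le> (norm x)^2 - (norm (cinner y x))^2 / ny"
    using ee by simp
  hence "(norm (cinner y x))^2 / ny \<le> (norm x)^2" by linarith
  hence "(norm (cinner y x))^2 \<le> (norm x)^2 * ny"
    using ny by (simp add: pos_divide_le_eq)
  hence "(norm (cinner y x))^2 \<le> (norm x)^2 * (norm y)^2"
    by (simp add: ny_def)
  hence "(norm (cinner y x))^2 \<le> (norm x * norm y)^2" by (simp add: power_mult_distrib)
  hence "norm (cinner y x) \<le> norm x * norm y"
    by (rule power2_le_imp_le) simp
  thus ?thesis using cxy complex_mod_cnj by metis
qed



lemma opword_append: "opword Y (v @ w) x = opword Y v (opword Y w x)"
  by (induction v) auto

lemma opword_replicate: "opword Y (replicate k j) x = (Y j ^^ k) x"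
  by (induction k) auto

locale ops =
  fixes X :: "nat \<Rightarrow> 'a::complex_inner \<Rightarrow> 'a" and D :: "'a set" and n :: nat
  assumes Dsub: "complex_subspace D"
    and lin: "\<forall>j\<in>{1..n}. linear_on D (X j)"
    and inv: "\<forall>j\<in>{1..n}. \<forall>x\<in>D. X j x \<in> D"
begin

lemma D0: "0 \<in> D" using Dsub by (simp add: complex_subspace_def)
lemma Dadd: "x \<in> D \<Longrightarrow> y \<in> D \<Longrightarrow> x + y \<in> D" using Dsub by (simp add: complex_subspace_def)
lemma Dscale: "x \<in> D \<Longrightarrow> c *\<^sub>C x \<in> D" using Dsub by (simp add: complex_subspace_def)
lemma Dsum: "(\<And>i. i \<in> I \<Longrightarrow> f i \<in> D) \<Longrightarrow> sum f I \<in> D"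
  by (induction I rule: infinite_finite_induct) (auto simp: D0 Dadd)
lemma Dsum_list: "(\<And>v. v \<in> set xs \<Longrightarrow> v \<in> D) \<Longrightarrow> sum_list xs \<in> D"
  by (induction xs) (auto simp: D0 Dadd)

lemma Xadd: "j \<in> {1..n} \<Longrightarrow> x \<in> D \<Longrightarrow> y \<in> D \<Longrightarrow> X j (x + y) = X j x + X j y"
  using lin by (auto simp: linear_on_def)
lemma Xscale: "j \<in> {1..n} \<Longrightarrow> x \<in> D \<Longrightarrow> X j (c *\<^sub>C x) = c *\<^sub>C X j x"
  using lin by (auto simp: linear_on_def)
lemma X0: "j \<in> {1..n} \<Longrightarrow> X j 0 = 0"
  using Xadd[of j 0 0] D0 by simp
lemma XD: "j \<in> {1..n} \<Longrightarrow> x \<in> D \<Longrightarrow> X j x \<in> D"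
  using inv by auto
lemma Xsum: "j \<in> {1..n} \<Longrightarrow> (\<And>i. i \<in> I \<Longrightarrow> f i \<in> D) \<Longrightarrow> X j (sum f I) = (\<Sum>i\<in>I. X j (f i))"
proof (induction I rule: infinite_finite_induct)
  case (insert i I)
  have "X j (sum f (insert i I)) = X j (f i + sum f I)" using insert by simp
  also have "\<dots> = X j (f i) + X j (sum f I)"
    using insert by (intro Xadd) (auto intro: Dsum)
  finally show ?case using insert by simp
qed (auto simp: X0)
lemma Xsum_list: "j \<in> {1..n} \<Longrightarrow> (\<And>v. v \<in> set xs \<Longrightarrow> v \<in> D) \<Longrightarrow> X j (sum_list xs) = sum_list (map (X j) xs)"
proof (induction xs)
  case (Cons v xs)
  thus ?case using Xadd[of j v "sum_list xs"] Dsum_list[of xs] by auto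
qed (auto simp: X0)

lemma opwordD: "set w \<subseteq> {1..n} \<Longrightarrow> x \<in> D \<Longrightarrow> opword X w x \<in> D"
  by (induction w) (auto simp: XD)

lemma powD: "j \<in> {1..n} \<Longrightarrow> x \<in> D \<Longrightarrow> (X j ^^ k) x \<in> D"
  by (induction k) (auto simp: XD)

lemma pow_scale: "j \<in> {1..n} \<Longrightarrow> x \<in> D \<Longrightarrow> (X j ^^ k) (c *\<^sub>C x) = c *\<^sub>C (X j ^^ k) x"
  by (induction k) (auto simp: Xscale powD)

end



lemma ratio_mono:
  fixes m :: "nat \<Rightarrow> real"
  assumes pos: "\<forall>k. m k > 0" and A1: "\<forall>p\<ge>1. (m p)\<^sup>2 \<le> m (p - 1) * m (p + 1)"
  shows "i \<le> j \<Longrightarrow> m (Suc i) / m i \<le> m (Suc j) / m j"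
proof (induction j rule: dec_induct)
  case (step j)
  have "(m (Suc j))^2 \<le> m j * m (Suc (Suc j))" using A1[rule_format, of "Suc j"] by simp
  hence "m (Suc j) / m j \<le> m (Suc (Suc j)) / m (Suc j)"
    using pos[rule_format, of j] pos[rule_format, of "Suc j"]
    by (simp add: divide_le_eq le_divide_eq power2_eq_square mult.commute)
  thus ?case using step by linarith
qed simp

lemma superadd:
  fixes m :: "nat \<Rightarrow> real"
  assumes pos: "\<forall>k. m k > 0" and A1: "\<forall>p\<ge>1. (m p)\<^sup>2 \<le> m (p - 1) * m (p + 1)" and m0: "m 0 = 1"
  shows "m p * m q \<le> m (p + q)"
proof (induction q)
  case 0 then show ?case by (simp add: m0)
next
  case (Suc q)
  have r: "m (Suc q) / m q \<le> m (Suc (p+q)) / m (p+q)" by (rule ratio_mono[OF pos A1]) simp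
  have "m p * m (Suc q) = m p * m q * (m (Suc q) / m q)" using pos[rule_format, of q] by simp
  also have "\<dots> \<le> m (p+q) * (m (Suc (p+q)) / m (p+q))"
    using Suc r pos by (intro mult_mono) (auto intro: mult_nonneg_nonneg less_imp_le)
  also have "\<dots> = m (Suc (p+q))" using pos[rule_format, of "p+q"] by simp
  finally show ?case by simp
qed

lemma prod_le_m:
  fixes m :: "nat \<Rightarrow> real"
  assumes pos: "\<forall>k. m k > 0" and A1: "\<forall>p\<ge>1. (m p)\<^sup>2 \<le> m (p - 1) * m (p + 1)" and m0: "m 0 = 1"
  shows "finite J \<Longrightarrow> (\<Prod>j\<in>J. m (f j)) \<le> m (\<Sum>j\<in>J. f j)"
proof (induction J rule: finite_induct)
  case empty then show ?case by (simp add: m0)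
next
  case (insert a J)
  have "(\<Prod>j\<in>insert a J. m (f j)) = m (f a) * (\<Prod>j\<in>J. m (f j))" using insert by simp
  also have "\<dots> \<le> m (f a) * m (\<Sum>j\<in>J. f j)"
    using insert pos by (intro mult_left_mono) (auto intro: less_imp_le)
  also have "\<dots> \<le> m (f a + (\<Sum>j\<in>J. f j))" by (rule superadd[OF pos A1 m0])
  finally show ?case using insert by simp
qed

lemma m_le_prod:
  fixes m :: "nat \<Rightarrow> real"
  assumes pos: "\<forall>k. m k > 0" and H: "H \<ge> 1" and A2: "\<forall>p q. m (p + q) \<le> H ^ (p + q) * m p * m q"
    and m0: "m 0 = 1"
  shows "finite J \<Longrightarrow> m (\<Sum>j\<in>J. f j) \<le> H ^ (card J * (\<Sum>j\<in>J. f j)) * (\<Prod>j\<in>J. m (f j))"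
proof (induction J rule: finite_induct)
  case empty then show ?case by (simp add: m0)
next
  case (insert a J)
  define S where "S = (\<Sum>j\<in>J. f j)"
  define P where "P = (\<Prod>j\<in>J. m (f j))"
  have P0: "P \<ge> 0" unfolding P_def using pos by (auto intro: prod_nonneg less_imp_le)
  have "m (\<Sum>j\<in>insert a J. f j) = m (f a + S)" using insert by (simp add: S_def)
  also have "\<dots> \<le> H ^ (f a + S) * m (f a) * m S" using A2 by blast
  also have "\<dots> \<le> H ^ (f a + S) * m (f a) * (H ^ (card J * S) * P)"
    using insert pos H by (intro mult_left_mono) (auto simp: S_def P_def intro: less_imp_le)
  also have "\<dots> = H ^ (f a + S + card J * S) * m (f a) * P" by (simp add: power_add)
  also have "\<dots> \<le> H ^ (Suc (card J) * (f a + S)) * m (f a) * P"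
    using H P0 pos[rule_format, of "f a"] by (intro mult_right_mono power_increasing) (auto simp: algebra_simps)
  finally show ?case using insert by (simp add: S_def P_def mult.assoc)
qed

lemma A3_iter:
  fixes m :: "nat \<Rightarrow> real"
  assumes pos: "\<forall>k. m k > 0" and L: "L \<ge> 1" and A3: "\<forall>p\<ge>1. real p * m (p - 1) \<le> L * m p"
  shows "i \<le> M \<Longrightarrow> fact M * m (M - i) \<le> L ^ i * fact (M - i) * m M"
proof (induction i)
  case 0 then show ?case by simp
next
  case (Suc i)
  have IH: "fact M * m (M - i) \<le> L ^ i * fact (M - i) * m M" using Suc by simp
  define q where "q = M - Suc i"
  have Mi: "M - i = Suc q" using Suc by (simp add: q_def)
  have a3: "real (Suc q) * m q \<le> L * m (Suc q)" using A3[rule_format, of "Suc q"] by simp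
  have "fact M * m (M - Suc i) * real (Suc q) = fact M * (real (Suc q) * m q)" by (simp add: q_def)
  also have "\<dots> \<le> fact M * (L * m (Suc q))" using a3 by (intro mult_left_mono) auto
  also have "\<dots> = L * (fact M * m (M - i))" using Mi by simp
  also have "\<dots> \<le> L * (L ^ i * fact (M - i) * m M)" using IH L by (intro mult_left_mono) auto
  also have "\<dots> = L ^ Suc i * fact (M - Suc i) * m M * real (Suc q)"
    using Mi by (simp add: q_def algebra_simps)
  finally show ?case by simp
qed

definition Pb :: "(nat \<Rightarrow> real) \<Rightarrow> real \<Rightarrow> nat \<Rightarrow> nat \<Rightarrow> real" where
  "Pb m \<kappa> k M = (\<Sum>i\<le>k. real (k choose i) * \<kappa> ^ i * m (M - i))"

lemma Pb_0: "Pb m \<kappa> 0 M = m M" by (simp add: Pb_def)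

lemma Pb_step:
  assumes "k \<le> M"
  shows "Pb m \<kappa> k (Suc M) + \<kappa> * Pb m \<kappa> k M = Pb m \<kappa> (Suc k) (Suc M)"
proof -
  have e1: "Pb m \<kappa> (Suc k) (Suc M) = m (Suc M) + (\<Sum>j\<le>k. real (Suc k choose Suc j) * \<kappa> ^ Suc j * m (M - j))"
    unfolding Pb_def by (subst sum.atMost_Suc_shift) simp
  have e2: "(\<Sum>j\<le>k. real (Suc k choose Suc j) * \<kappa> ^ Suc j * m (M - j))
     = (\<Sum>j\<le>k. real (k choose j) * \<kappa> ^ Suc j * m (M - j)) + (\<Sum>j\<le>k. real (k choose Suc j) * \<kappa> ^ Suc j * m (M - j))"
    by (simp add: sum.distrib[symmetric] algebra_simps)
  have e3: "(\<Sum>j\<le>k. real (k choose j) * \<kappa> ^ Suc j * m (M - j)) = \<kappa> * Pb m \<kappa> k M"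
    unfolding Pb_def by (simp add: sum_distrib_left algebra_simps)
  have e4: "Pb m \<kappa> k (Suc M) = m (Suc M) + (\<Sum>j\<le>k. real (k choose Suc j) * \<kappa> ^ Suc j * m (M - j))"
  proof -
    have "Pb m \<kappa> k (Suc M) = (\<Sum>i\<le>Suc k. real (k choose i) * \<kappa> ^ i * m (Suc M - i))"
      unfolding Pb_def by simp
    also have "\<dots> = m (Suc M) + (\<Sum>j\<le>k. real (k choose Suc j) * \<kappa> ^ Suc j * m (M - j))"
      by (subst sum.atMost_Suc_shift) simp
    finally show ?thesis .
  qed
  show ?thesis using e1 e2 e3 e4 by linarith
qed

lemma Pb_bound:
  fixes m :: "nat \<Rightarrow> real"
  assumes pos: "\<forall>k. m k > 0" and L: "L \<ge> 1" and A3: "\<forall>p\<ge>1. real p * m (p - 1) \<le> L * m p"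
    and kap: "\<kappa> \<ge> 0" and kM: "k \<le> M"
  shows "Pb m \<kappa> k M \<le> exp (\<kappa> * L) * m M"
proof -
  have t: "real (k choose i) * \<kappa> ^ i * m (M - i) \<le> ((\<kappa> * L) ^ i / fact i) * m M" if i: "i \<le> k" for i
  proof -
    have iM: "i \<le> M" using i kM by simp
    have c1: "real (k choose i) \<le> real (M choose i)" using binomial_right_mono[OF kM] by simp
    have c2: "fact i * real (M choose i) = fact M / fact (M - i)" by (rule fact_binomial[OF iM])
    have a: "fact M * m (M - i) \<le> L ^ i * fact (M - i) * m M" by (rule A3_iter[OF pos L A3 iM])
    have "real (M choose i) * m (M - i) = fact M * m (M - i) / (fact i * fact (M - i))"
      using c2 by (simp add: field_simps)
    also have "\<dots> \<le> L ^ i * fact (M - i) * m M / (fact i * fact (M - i))"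
      using a by (intro divide_right_mono) auto
    also have "\<dots> = L ^ i / fact i * m M" by simp
    finally have b: "real (M choose i) * m (M - i) \<le> L ^ i / fact i * m M" .
    have "real (k choose i) * \<kappa> ^ i * m (M - i) = \<kappa> ^ i * (real (k choose i) * m (M - i))" by simp
    also have "\<dots> \<le> \<kappa> ^ i * (real (M choose i) * m (M - i))"
      using c1 pos kap by (intro mult_left_mono mult_right_mono) (auto intro: less_imp_le)
    also have "\<dots> \<le> \<kappa> ^ i * (L ^ i / fact i * m M)"
      using b kap by (intro mult_left_mono) auto
    also have "\<dots> = ((\<kappa> * L) ^ i / fact i) * m M" by (simp add: power_mult_distrib)
    finally show ?thesis .
  qed
  have "Pb m \<kappa> k M \<le> (\<Sum>i\<le>k. ((\<kappa> * L) ^ i / fact i) * m M)"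
    unfolding Pb_def by (intro sum_mono t) auto
  also have "\<dots> = (\<Sum>i\<le>k. inverse (fact i) * (\<kappa> * L) ^ i) * m M"
    by (simp add: sum_distrib_right sum_distrib_left divide_inverse mult_ac power_mult_distrib)
  also have "\<dots> \<le> exp (\<kappa> * L) * m M"
  proof (intro mult_right_mono)
    have "(\<Sum>i\<le>k. inverse (fact i) * (\<kappa> * L) ^ i) = (\<Sum>i<Suc k. inverse (fact i) * (\<kappa> * L) ^ i)"
      by (simp add: lessThan_Suc_atMost)
    also have "\<dots> \<le> (\<Sum>i. inverse (fact i) * (\<kappa> * L) ^ i)"
      using kap L by (intro sum_le_suminf[OF summable_exp]) auto
    also have "\<dots> = exp (\<kappa> * L)" by (simp add: exp_def scaleR_conv_of_real field_simps)
    finally show "(\<Sum>i\<le>k. inverse (fact i) * (\<kappa> * L) ^ i) \<le> exp (\<kappa> * L)" .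
  qed (use pos in \<open>auto intro: less_imp_le\<close>)
  finally show ?thesis .
qed



locale opsc = ops X D n for X :: "nat \<Rightarrow> 'a::complex_inner \<Rightarrow> 'a" and D n +
  fixes cc :: "nat \<Rightarrow> nat \<Rightarrow> complex"
  assumes n2: "n \<ge> 2"
    and commc: "\<forall>j\<in>{1..n-1}. \<forall>x\<in>D. X j (X n x) - X n (X j x) = (\<Sum>k=1..n. cc j k *\<^sub>C X k x)"
begin

definition opa :: "(nat \<Rightarrow> complex) \<Rightarrow> 'a \<Rightarrow> 'a" where
  "opa a x = (\<Sum>r=1..n. a r *\<^sub>C X r x)"
definition anorm :: "(nat \<Rightarrow> complex) \<Rightarrow> real" where
  "anorm a = (\<Sum>r=1..n. cmod (a r))"
definition Ta :: "(nat \<Rightarrow> complex) \<Rightarrow> nat \<Rightarrow> complex" where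
  "Ta a = (\<lambda>s. \<Sum>r=1..n-1. a r * cc r s)"
definition kap :: real where
  "kap = (\<Sum>r=1..n-1. \<Sum>s=1..n. cmod (cc r s))"

lemma nin: "n \<in> {1..n}" using n2 by simp
lemma sub_n: "j \<in> {1..n-1} \<Longrightarrow> j \<in> {1..n}" by auto

lemma kap_nonneg: "kap \<ge> 0" unfolding kap_def by (intro sum_nonneg) auto

lemma anorm_nonneg: "anorm a \<ge> 0" unfolding anorm_def by (intro sum_nonneg) auto

lemma opaD: "x \<in> D \<Longrightarrow> opa a x \<in> D"
  unfolding opa_def by (intro Dsum Dscale XD) auto

lemma anorm_Ta: "anorm (Ta a) \<le> kap * anorm a"
proof -
  have "anorm (Ta a) = (\<Sum>s=1..n. cmod (\<Sum>r=1..n-1. a r * cc r s))" by (simp add: anorm_def Ta_def)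
  also have "\<dots> \<le> (\<Sum>s=1..n. \<Sum>r=1..n-1. cmod (a r) * cmod (cc r s))"
    by (intro sum_mono order.trans[OF norm_sum]) (simp add: norm_mult)
  also have "\<dots> = (\<Sum>r=1..n-1. cmod (a r) * (\<Sum>s=1..n. cmod (cc r s)))"
    by (subst sum.swap) (simp add: sum_distrib_left)
  also have "\<dots> \<le> (\<Sum>r=1..n-1. cmod (a r) * kap)"
  proof (intro sum_mono mult_left_mono)
    fix r assume r: "r \<in> {1..n-1}"
    show "(\<Sum>s=1..n. cmod (cc r s)) \<le> kap"
      unfolding kap_def using r by (intro member_le_sum) (auto intro: sum_nonneg)
  qed auto
  also have "\<dots> = kap * (\<Sum>r=1..n-1. cmod (a r))" by (simp add: sum_distrib_left mult.commute)
  also have "\<dots> \<le> kap * anorm a"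
    unfolding anorm_def using kap_nonneg by (intro mult_left_mono sum_mono2) auto
  finally show ?thesis .
qed

lemma key_comm:
  assumes x: "x \<in> D"
  shows "opa a (X n x) = X n (opa a x) + opa (Ta a) x"
proof -
  define d where "d r = (if r \<in> {1..n-1} then (\<Sum>s=1..n. cc r s *\<^sub>C X s x) else 0)" for r
  have xr: "X r (X n x) = X n (X r x) + d r" if r: "r \<in> {1..n}" for r
  proof (cases "r \<in> {1..n-1}")
    case True
    then show ?thesis using commc x by (auto simp: d_def algebra_simps)
  next
    case False
    then have rn: "r = n" using r by auto
    have "d r = 0" unfolding d_def using False by (rule if_not_P)
    with rn show ?thesis by simp
  qed
  have "opa a (X n x) = (\<Sum>r=1..n. a r *\<^sub>C X n (X r x)) + (\<Sum>r=1..n. a r *\<^sub>C d r)"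
    unfolding opa_def by (simp add: xr scaleC_add_right sum.distrib)
  also have "(\<Sum>r=1..n. a r *\<^sub>C X n (X r x)) = X n (opa a x)"
    unfolding opa_def using x by (subst Xsum[OF nin]) (auto simp: Xscale[OF nin] XD Dscale)
  also have "(\<Sum>r=1..n. a r *\<^sub>C d r) = (\<Sum>r=1..n-1. a r *\<^sub>C (\<Sum>s=1..n. cc r s *\<^sub>C X s x))"
  proof -
    have "(\<Sum>r=1..n. a r *\<^sub>C d r) = (\<Sum>r=1..n-1. a r *\<^sub>C d r)"
      by (rule sum.mono_neutral_right) (auto simp: d_def)
    thus ?thesis by (simp add: d_def)
  qed
  also have "\<dots> = (\<Sum>r=1..n-1. \<Sum>s=1..n. (a r * cc r s) *\<^sub>C X s x)"
    by (simp add: scaleC_sum_right scaleC_scaleC)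
  also have "\<dots> = (\<Sum>s=1..n. \<Sum>r=1..n-1. (a r * cc r s) *\<^sub>C X s x)"
    by (rule sum.swap)
  also have "\<dots> = opa (Ta a) x"
    unfolding opa_def Ta_def by (simp add: scaleC_sum_left)
  finally show ?thesis .
qed

definition ev :: "(complex \<times> nat \<times> nat list) list \<Rightarrow> 'a \<Rightarrow> 'a" where
  "ev R x = sum_list (map (\<lambda>(c,k,b). c *\<^sub>C (X n ^^ k) (opword X b x)) R)"
definition mass :: "(nat \<Rightarrow> real) \<Rightarrow> nat \<Rightarrow> (complex \<times> nat \<times> nat list) list \<Rightarrow> real" where
  "mass m s R = sum_list (map (\<lambda>(c,k,b). cmod c * m (k + length b + s)) R)"
definition nrm :: "(complex \<times> nat \<times> nat list) list \<Rightarrow> bool" where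
  "nrm R \<longleftrightarrow> (\<forall>t\<in>set R. set (snd (snd t)) \<subseteq> {1..n-1})"
definition sh :: "(complex \<times> nat \<times> nat list) list \<Rightarrow> (complex \<times> nat \<times> nat list) list" where
  "sh R = map (\<lambda>(c,k,b). (c, Suc k, b)) R"
definition scl :: "complex \<Rightarrow> (complex \<times> nat \<times> nat list) list \<Rightarrow> (complex \<times> nat \<times> nat list) list" where
  "scl d R = map (\<lambda>(c,k,b). (d * c, k, b)) R"

lemma ev_append: "ev (R1 @ R2) x = ev R1 x + ev R2 x" by (simp add: ev_def)
lemma mass_append: "mass m s (R1 @ R2) = mass m s R1 + mass m s R2" by (simp add: mass_def)
lemma nrm_append: "nrm (R1 @ R2) \<longleftrightarrow> nrm R1 \<and> nrm R2" by (auto simp: nrm_def)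
lemma nrm_sh: "nrm (sh R) = nrm R" unfolding nrm_def sh_def by (simp add: split_def)
lemma nrm_scl: "nrm (scl d R) = nrm R" unfolding nrm_def scl_def by (simp add: split_def)

lemma set_sub: assumes "set b \<subseteq> {1..n-1}" shows "set b \<subseteq> {1..n}"
proof
  fix x assume "x \<in> set b"
  with assms have "x \<in> {1..n-1}" by blast
  thus "x \<in> {1..n}" by auto
qed

lemma term_D: "set b \<subseteq> {1..n-1} \<Longrightarrow> x \<in> D \<Longrightarrow> (X n ^^ k) (opword X b x) \<in> D"
  by (intro powD[OF nin] opwordD set_sub)

lemma evD: assumes R: "nrm R" and x: "x \<in> D" shows "ev R x \<in> D"
  unfolding ev_def
proof (intro Dsum_list)
  fix v assume "v \<in> set (map (\<lambda>(c,k,b). c *\<^sub>C (X n ^^ k) (opword X b x)) R)"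
  then obtain c k b where cb: "(c,k,b) \<in> set R" "v = c *\<^sub>C (X n ^^ k) (opword X b x)" by auto
  have "set b \<subseteq> {1..n-1}" using R cb(1) unfolding nrm_def by fastforce
  thus "v \<in> D" using cb(2) x by (simp add: Dscale term_D)
qed

lemma ev_sh: "nrm R \<Longrightarrow> x \<in> D \<Longrightarrow> ev (sh R) x = X n (ev R x)"
proof (induction R)
  case Nil then show ?case by (simp add: ev_def sh_def X0[OF nin])
next
  case (Cons t R)
  obtain c k b where t: "t = (c,k,b)" by (cases t) auto
  have b: "set b \<subseteq> {1..n-1}" using Cons.prems t by (auto simp: nrm_def)
  have R: "nrm R" using Cons.prems by (auto simp: nrm_def)
  have "ev (sh (t # R)) x = c *\<^sub>C X n ((X n ^^ k) (opword X b x)) + ev (sh R) x"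
    by (simp add: t ev_def sh_def)
  also have "\<dots> = X n (c *\<^sub>C (X n ^^ k) (opword X b x)) + X n (ev R x)"
    using Cons R b by (simp add: Xscale[OF nin] term_D)
  also have "\<dots> = X n (c *\<^sub>C (X n ^^ k) (opword X b x) + ev R x)"
    using R b Cons.prems by (intro Xadd[OF nin, symmetric] Dscale term_D evD) auto
  also have "\<dots> = X n (ev (t # R) x)" by (simp add: t ev_def)
  finally show ?case .
qed

lemma mass_sh: "mass m s (sh R) = mass m (Suc s) R"
  unfolding mass_def sh_def by (induction R) auto

lemma ev_scl: "ev (scl d R) x = d *\<^sub>C ev R x"
  unfolding ev_def scl_def by (induction R) (auto simp: scaleC_add_right scaleC_scaleC)

lemma mass_scl: "mass m s (scl d R) = cmod d * mass m s R"
  unfolding mass_def scl_def by (induction R) (auto simp: norm_mult algebra_simps)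

end



context opsc begin

lemma Pb_nonneg: "(\<forall>k. m k \<ge> 0) \<Longrightarrow> Pb m kap k M \<ge> 0"
  unfolding Pb_def using kap_nonneg by (intro sum_nonneg mult_nonneg_nonneg) auto

lemma lemB:
  assumes mnn: "\<forall>k. m k \<ge> 0" and b: "set b \<subseteq> {1..n-1}"
  shows "\<exists>R. nrm R \<and> (\<forall>x\<in>D. ev R x = opa a ((X n ^^ k) (opword X b x)))
            \<and> (\<forall>s. mass m s R \<le> anorm a * Pb m kap k (k + length b + 1 + s))"
proof (induction k arbitrary: a)
  case 0
  define R where "R = map (\<lambda>r. (a r, 0::nat, r # b)) [1..<n] @ [(a n, 1, b)]"
  have "nrm R" unfolding R_def nrm_def using b by auto
  moreover have "ev R x = opa a ((X n ^^ 0) (opword X b x))" if x: "x \<in> D" for x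
  proof -
    have "ev R x = (\<Sum>r\<in>{1..<n}. a r *\<^sub>C X r (opword X b x)) + a n *\<^sub>C X n (opword X b x)"
      unfolding R_def ev_def by (simp add: sum_set_upt_conv_sum_list_nat[symmetric] o_def)
    also have "\<dots> = (\<Sum>r\<in>{1..<Suc n}. a r *\<^sub>C X r (opword X b x))"
      using n2 by (subst sum.atLeastLessThan_Suc) auto
    also have "\<dots> = opa a ((X n ^^ 0) (opword X b x))"
      unfolding opa_def by (simp add: atLeastLessThanSuc_atLeastAtMost)
    finally show ?thesis .
  qed
  moreover have "mass m s R \<le> anorm a * Pb m kap 0 (0 + length b + 1 + s)" for s
  proof -
    have "mass m s R = (\<Sum>r\<in>{1..<n}. cmod (a r) * m (Suc (length b + s))) + cmod (a n) * m (Suc (length b + s))"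
      unfolding R_def mass_def by (simp add: sum_set_upt_conv_sum_list_nat[symmetric] o_def)
    also have "\<dots> = (\<Sum>r\<in>{1..<Suc n}. cmod (a r) * m (Suc (length b + s)))"
      using n2 by (subst sum.atLeastLessThan_Suc) auto
    also have "\<dots> = anorm a * Pb m kap 0 (0 + length b + 1 + s)"
      unfolding anorm_def Pb_0 by (simp add: atLeastLessThanSuc_atLeastAtMost sum_distrib_right)
    finally show ?thesis by simp
  qed
  ultimately show ?case by blast
next
  case (Suc k)
  obtain R1 where R1: "nrm R1" "\<forall>x\<in>D. ev R1 x = opa a ((X n ^^ k) (opword X b x))"
    "\<forall>s. mass m s R1 \<le> anorm a * Pb m kap k (k + length b + 1 + s)"
    using Suc.IH by blast
  obtain R2 where R2: "nrm R2" "\<forall>x\<in>D. ev R2 x = opa (Ta a) ((X n ^^ k) (opword X b x))"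
    "\<forall>s. mass m s R2 \<le> anorm (Ta a) * Pb m kap k (k + length b + 1 + s)"
    using Suc.IH by blast
  define R where "R = sh R1 @ R2"
  have "nrm R" using R1 R2 by (simp add: R_def nrm_append nrm_sh)
  moreover have "ev R x = opa a ((X n ^^ Suc k) (opword X b x))" if x: "x \<in> D" for x
  proof -
    have z: "(X n ^^ k) (opword X b x) \<in> D" using term_D[OF b x] .
    have "ev R x = X n (ev R1 x) + ev R2 x" using R1 x by (simp add: R_def ev_append ev_sh)
    also have "\<dots> = X n (opa a ((X n ^^ k) (opword X b x))) + opa (Ta a) ((X n ^^ k) (opword X b x))"
      using R1 R2 x by simp
    also have "\<dots> = opa a (X n ((X n ^^ k) (opword X b x)))" using key_comm[OF z] by simp
    finally show ?thesis by simp
  qed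
  moreover have "mass m s R \<le> anorm a * Pb m kap (Suc k) (Suc k + length b + 1 + s)" for s
  proof -
    define M where "M = k + length b + 1 + s"
    have pb: "Pb m kap k M \<ge> 0" by (rule Pb_nonneg[OF mnn])
    have "mass m s R = mass m (Suc s) R1 + mass m s R2" by (simp add: R_def mass_append mass_sh)
    also have "\<dots> \<le> anorm a * Pb m kap k (Suc M) + anorm (Ta a) * Pb m kap k M"
      using R1(3)[rule_format, of "Suc s"] R2(3)[rule_format, of s] by (simp add: M_def)
    also have "\<dots> \<le> anorm a * Pb m kap k (Suc M) + (kap * anorm a) * Pb m kap k M"
      using anorm_Ta pb by (intro add_left_mono mult_right_mono) auto
    also have "\<dots> = anorm a * (Pb m kap k (Suc M) + kap * Pb m kap k M)" by (simp add: algebra_simps)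
    also have "\<dots> = anorm a * Pb m kap (Suc k) (Suc M)" by (subst Pb_step) (auto simp: M_def)
    finally show ?thesis by (simp add: M_def)
  qed
  ultimately show ?case by blast
qed

lemma opa_delta: assumes j: "j \<in> {1..n}" shows "opa (\<lambda>r. if r = j then 1 else 0) v = X j v"
proof -
  have "opa (\<lambda>r. if r = j then 1 else 0) v = (\<Sum>r\<in>{1..n}. if r = j then X r v else 0)"
    unfolding opa_def by (rule sum.cong) (auto simp: scaleC_one)
  thus ?thesis using j by simp
qed

lemma anorm_delta: "j \<in> {1..n} \<Longrightarrow> anorm (\<lambda>r. if r = j then 1 else 0) = 1"
  unfolding anorm_def by (simp add: if_distrib cong: if_cong)

lemma lemP:
  assumes mnn: "\<forall>k. m k \<ge> 0" and j: "j \<in> {1..n-1}"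
    and PE: "\<forall>k M. k \<le> M \<longrightarrow> Pb m kap k M \<le> E * m M"
  shows "nrm R \<Longrightarrow> \<exists>R'. nrm R' \<and> (\<forall>x\<in>D. ev R' x = X j (ev R x)) \<and> (\<forall>s. mass m s R' \<le> E * mass m (Suc s) R)"
proof (induction R)
  case Nil
  have "ev [] x = 0" for x by (simp add: ev_def)
  moreover have "nrm []" by (simp add: nrm_def)
  ultimately show ?case using X0[OF sub_n[OF j]] by (intro exI[of _ "[]"]) (simp add: mass_def)
next
  case (Cons t R)
  obtain c k b where t: "t = (c,k,b)" by (cases t) auto
  have b: "set b \<subseteq> {1..n-1}" using Cons.prems t by (auto simp: nrm_def)
  have R: "nrm R" using Cons.prems by (auto simp: nrm_def)
  obtain R' where R': "nrm R'" "\<forall>x\<in>D. ev R' x = X j (ev R x)" "\<forall>s. mass m s R' \<le> E * mass m (Suc s) R"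
    using Cons.IH R by blast
  define a where "a = (\<lambda>r. if r = j then (1::complex) else 0)"
  obtain Rt where Rt: "nrm Rt" "\<forall>x\<in>D. ev Rt x = opa a ((X n ^^ k) (opword X b x))"
    "\<forall>s. mass m s Rt \<le> anorm a * Pb m kap k (k + length b + 1 + s)"
    using lemB[OF mnn b] by blast
  define Q where "Q = scl c Rt @ R'"
  have "nrm Q" using Rt R' by (simp add: Q_def nrm_append nrm_scl)
  moreover have "ev Q x = X j (ev (t # R) x)" if x: "x \<in> D" for x
  proof -
    have z: "(X n ^^ k) (opword X b x) \<in> D" using term_D[OF b x] .
    have "ev Q x = c *\<^sub>C X j ((X n ^^ k) (opword X b x)) + X j (ev R x)"
      using Rt R' x by (simp add: Q_def ev_append ev_scl a_def opa_delta[OF sub_n[OF j]])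
    also have "\<dots> = X j (c *\<^sub>C (X n ^^ k) (opword X b x) + ev R x)"
      using z R x sub_n[OF j] by (simp add: Xadd Xscale Dscale evD)
    also have "\<dots> = X j (ev (t # R) x)" by (simp add: t ev_def)
    finally show ?thesis .
  qed
  moreover have "mass m s Q \<le> E * mass m (Suc s) (t # R)" for s
  proof -
    have "mass m s Q = cmod c * mass m s Rt + mass m s R'" by (simp add: Q_def mass_append mass_scl)
    also have "\<dots> \<le> cmod c * (E * m (k + length b + Suc s)) + E * mass m (Suc s) R"
    proof (intro add_mono mult_left_mono)
      have "mass m s Rt \<le> anorm a * Pb m kap k (k + length b + 1 + s)" using Rt by blast
      also have "\<dots> = Pb m kap k (k + length b + 1 + s)" using anorm_delta[OF sub_n[OF j]] by (simp add: a_def)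
      also have "\<dots> \<le> E * m (k + length b + 1 + s)" using PE by simp
      finally show "mass m s Rt \<le> E * m (k + length b + Suc s)" by simp
    qed (use R' in auto)
    also have "\<dots> = E * mass m (Suc s) (t # R)" by (simp add: t mass_def algebra_simps)
    finally show ?thesis .
  qed
  ultimately show ?case by blast
qed

lemma lemW:
  assumes mnn: "\<forall>k. m k \<ge> 0" and E1: "E \<ge> 1"
    and PE: "\<forall>k M. k \<le> M \<longrightarrow> Pb m kap k M \<le> E * m M"
  shows "set w \<subseteq> {1..n} \<Longrightarrow> \<exists>R. nrm R \<and> (\<forall>x\<in>D. ev R x = opword X w x) \<and> (\<forall>s. mass m s R \<le> E ^ length w * m (length w + s))"
proof (induction w)
  case Nil
  have "nrm [(1,0,[])]" by (simp add: nrm_def)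
  moreover have "ev [(1,0,[])] x = opword X [] x" for x by (simp add: ev_def scaleC_one)
  moreover have "mass m s [(1,0,[])] \<le> E ^ length [] * m (length [] + s)" for s by (simp add: mass_def)
  ultimately show ?case by blast
next
  case (Cons j w)
  then obtain R where R: "nrm R" "\<forall>x\<in>D. ev R x = opword X w x" "\<forall>s. mass m s R \<le> E ^ length w * m (length w + s)"
    by auto
  have mE: "E ^ length w * m (length w + Suc s) \<le> E ^ length (j # w) * m (length (j # w) + s)" for s
  proof -
    have a0: "0 \<le> E ^ length w * m (length w + Suc s)" using E1 mnn by simp
    have "E ^ length w * m (length w + Suc s) \<le> E * (E ^ length w * m (length w + Suc s))"
      using mult_right_mono[OF E1 a0] by simp
    thus ?thesis by simp
  qed
  show ?case
  proof (cases "j = n")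
    case True
    have "nrm (sh R)" using R by (simp add: nrm_sh)
    moreover have "\<forall>x\<in>D. ev (sh R) x = opword X (j # w) x" using R True by (simp add: ev_sh)
    moreover have "mass m s (sh R) \<le> E ^ length (j # w) * m (length (j # w) + s)" for s
      using R(3)[rule_format, of "Suc s"] mE[of s] by (simp add: mass_sh)
    ultimately show ?thesis by blast
  next
    case False
    then have j: "j \<in> {1..n-1}" using Cons.prems by auto
    obtain R' where R': "nrm R'" "\<forall>x\<in>D. ev R' x = X j (ev R x)" "\<forall>s. mass m s R' \<le> E * mass m (Suc s) R"
      using lemP[OF mnn j PE R(1)] by blast
    have "\<forall>x\<in>D. ev R' x = opword X (j # w) x" using R R' by simp
    moreover have "mass m s R' \<le> E ^ length (j # w) * m (length (j # w) + s)" for s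
    proof -
      have "mass m s R' \<le> E * mass m (Suc s) R" using R' by blast
      also have "\<dots> \<le> E * (E ^ length w * m (length w + Suc s))"
        using R(3)[rule_format, of "Suc s"] E1 by (intro mult_left_mono) auto
      finally show ?thesis by simp
    qed
    ultimately show ?thesis using R' by blast
  qed
qed

end



lemma adj1:
  assumes h: "hermitian_on D Z \<or> skew_hermitian_on D Z" and y: "y \<in> D" and z: "z \<in> D"
  shows "\<exists>e::complex. cmod e = 1 \<and> cinner (Z y) z = e * cinner y (Z z)"
  using h
proof
  assume "hermitian_on D Z"
  then show ?thesis using y z by (intro exI[of _ 1]) (auto simp: hermitian_on_def)
next
  assume "skew_hermitian_on D Z"
  then show ?thesis using y z by (intro exI[of _ "-1"]) (auto simp: skew_hermitian_on_def)
qed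

context ops begin

lemma adj_word:
  assumes herm: "\<forall>j\<in>{1..n}. hermitian_on D (X j) \<or> skew_hermitian_on D (X j)" and y: "y \<in> D"
  shows "set w \<subseteq> {1..n} \<Longrightarrow> z \<in> D \<Longrightarrow> \<exists>e. cmod e = 1 \<and> cinner (opword X w y) z = e * cinner y (opword X (rev w) z)"
proof (induction w arbitrary: z)
  case Nil then show ?case by (intro exI[of _ 1]) auto
next
  case (Cons j w)
  have j: "j \<in> {1..n}" and w: "set w \<subseteq> {1..n}" using Cons.prems by auto
  have v: "opword X w y \<in> D" using opwordD[OF w y] .
  obtain e1 where e1: "cmod e1 = 1" "cinner (X j (opword X w y)) z = e1 * cinner (opword X w y) (X j z)"
    using adj1[OF _ v Cons.prems(2), of "X j"] herm j by blast
  obtain e2 where e2: "cmod e2 = 1" "cinner (opword X w y) (X j z) = e2 * cinner y (opword X (rev w) (X j z))"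
    using Cons.IH[OF w XD[OF j Cons.prems(2)]] by blast
  have "cinner (opword X (j # w) y) z = (e1 * e2) * cinner y (opword X (rev (j # w)) z)"
    using e1 e2 by (simp add: opword_append)
  moreover have "cmod (e1 * e2) = 1" using e1 e2 by (simp add: norm_mult)
  ultimately show ?case by blast
qed

end

context opsc begin

lemma inner_ev:
  assumes u: "u \<in> D"
    and tb: "\<forall>k \<beta>. set \<beta> \<subseteq> {1..n-1} \<longrightarrow> cmod (cinner u ((X n ^^ k) (opword X \<beta> u))) \<le> K * mt (k + length \<beta>)"
  shows "nrm R \<Longrightarrow> cmod (cinner u (ev R u)) \<le> K * mass mt 0 R"
proof (induction R)
  case Nil then show ?case by (simp add: ev_def mass_def)
next
  case (Cons t R)
  obtain c k b where t: "t = (c,k,b)" by (cases t) auto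
  have b: "set b \<subseteq> {1..n-1}" using Cons.prems t by (auto simp: nrm_def)
  have R: "nrm R" using Cons.prems by (auto simp: nrm_def)
  have "cinner u (ev (t # R) u) = c * cinner u ((X n ^^ k) (opword X b u)) + cinner u (ev R u)"
    by (simp add: t ev_def cinner_add_right cinner_scaleC_right)
  hence "cmod (cinner u (ev (t # R) u)) \<le> cmod c * cmod (cinner u ((X n ^^ k) (opword X b u))) + cmod (cinner u (ev R u))"
    by (metis norm_mult norm_triangle_ineq)
  also have "\<dots> \<le> cmod c * (K * mt (k + length b)) + K * mass mt 0 R"
    using tb b Cons.IH[OF R] by (intro add_mono mult_left_mono) auto
  also have "\<dots> = K * mass mt 0 (t # R)" by (simp add: t mass_def algebra_simps)
  finally show ?case .
qed

end



lemma count_rep: "count_list (replicate k x) y = (if x = y then k else 0)"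
  by (induction k) auto

theorem proposition3p3:
  fixes X :: "nat \<Rightarrow> 'a::chilbert_space \<Rightarrow> 'a"
    and D :: "'a set"
    and m :: "nat \<Rightarrow> real"
    and n :: nat
    and u :: 'a
  assumes n_ge: "n \<ge> 2"
    and D_sub: "complex_subspace D"
    and lin: "\<forall>j\<in>{1..n}. linear_on D (X j)"
    and herm: "\<forall>j\<in>{1..n}. hermitian_on D (X j) \<or> skew_hermitian_on D (X j)"
    and inv: "\<forall>j\<in>{1..n}. \<forall>x\<in>D. X j x \<in> D"
    and m_pos: "\<forall>k. m k > 0"
    and A0: "m 0 = 1 \<and> m 1 = 1"
    and A1: "\<forall>p\<ge>1. (m p)\<^sup>2 \<le> m (p - 1) * m (p + 1)"
    and A2: "\<exists>H>0. \<forall>p q. m (p + q) \<le> H ^ (p + q) * m p * m q"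
    and A3': "\<exists>L\<ge>1. \<forall>p\<ge>1. real p * m (p - 1) \<le> L * m p"
    and comm: "\<forall>j\<in>{1..n-1}. \<exists>c :: nat \<Rightarrow> complex. \<forall>x\<in>D.
                 X j (X n x) - X n (X j x) = (\<Sum>k=1..n. c k *\<^sub>C X k x)"
    and uD: "u \<in> D"
  shows "u \<in> S_class n X (\<lambda>_. m) \<longleftrightarrow>
           u \<in> S_class (n - 1) X (\<lambda>_. m) \<inter> S_single (X n) m"
proof -
  interpret ops X D n using D_sub lin inv by unfold_locales
  obtain cc where cc: "\<forall>j\<in>{1..n-1}. \<forall>x\<in>D. X j (X n x) - X n (X j x) = (\<Sum>k=1..n. cc j k *\<^sub>C X k x)"
    using bchoice[OF comm] by blast
  interpret opsc X D n cc by unfold_locales (use n_ge cc in auto)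
  have m0: "m 0 = 1" using A0 by simp
  have mnn: "\<forall>k. m k \<ge> 0" using m_pos by (auto intro: less_imp_le)
  obtain H where H: "H > 0" "\<forall>p q. m (p + q) \<le> H ^ (p + q) * m p * m q" using A2 by blast
  define H' where "H' = max H 1"
  have H'1: "H' \<ge> 1" by (simp add: H'_def)
  have A2': "\<forall>p q. m (p + q) \<le> H' ^ (p + q) * m p * m q"
  proof (intro allI)
    fix p q
    have "H ^ (p + q) \<le> H' ^ (p + q)" using H(1) by (intro power_mono) (auto simp: H'_def)
    hence "H ^ (p + q) * (m p * m q) \<le> H' ^ (p + q) * (m p * m q)"
      using mnn by (intro mult_right_mono) auto
    thus "m (p + q) \<le> H' ^ (p + q) * m p * m q" using H(2)[rule_format, of p q] by (simp add: mult.assoc)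
  qed
  obtain L where L: "L \<ge> 1" "\<forall>p\<ge>1. real p * m (p - 1) \<le> L * m p" using A3' by blast
  have nsub: "{1..n-1} \<subseteq> {1..n}" by auto
  show ?thesis
  proof
    assume "u \<in> S_class n X (\<lambda>_. m)"
    then obtain A C where AC: "A > 0" "C > 0" "\<forall>\<alpha>\<in>multi_indices n.
      norm (opword X \<alpha> u) \<le> C * A ^ length \<alpha> * seq_weight n (\<lambda>_. m) \<alpha>"
      unfolding S_class_def by blast
    have "u \<in> S_class (n - 1) X (\<lambda>_. m)"
      unfolding S_class_def
    proof (intro CollectI exI conjI ballI)
      fix \<alpha> assume a: "\<alpha> \<in> multi_indices (n - 1)"
      have s: "set \<alpha> \<subseteq> {1..n-1}" and ne: "\<alpha> \<noteq> []" using a by (auto simp: multi_indices_def)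
      have a': "\<alpha> \<in> multi_indices n" using set_sub[OF s] ne by (simp add: multi_indices_def)
      have nn: "n \<notin> set \<alpha>"
      proof
        assume "n \<in> set \<alpha>"
        hence "n \<in> {1..n-1}" using s by blast
        thus False using n_ge by auto
      qed
      have "seq_weight n (\<lambda>_. m) \<alpha> = seq_weight (n - 1) (\<lambda>_. m) \<alpha> * m (count_list \<alpha> n)"
      proof -
        have e: "{1..n} = insert n {1..n-1}" using n_ge by auto
        have ni: "n \<notin> {1..n-1}" using n_ge by auto
        show ?thesis unfolding seq_weight_def e using ni by (simp add: prod.insert mult.commute)
      qed
      also have "\<dots> = seq_weight (n - 1) (\<lambda>_. m) \<alpha>" using nn m0 by simp
      finally show "norm (opword X \<alpha> u) \<le> C * A ^ length \<alpha> * seq_weight (n - 1) (\<lambda>_. m) \<alpha>"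
        using AC(3) a' by metis
    qed (use AC in auto)
    moreover have "u \<in> S_single (X n) m"
      unfolding S_single_def
    proof (intro CollectI exI conjI allI impI)
      fix k :: nat assume k: "k \<ge> 1"
      have a: "replicate k n \<in> multi_indices n" using k n_ge by (auto simp: multi_indices_def)
      have "seq_weight n (\<lambda>_. m) (replicate k n) = (\<Prod>j\<in>{1..n}. if j = n then m k else 1)"
        unfolding seq_weight_def by (rule prod.cong) (auto simp: m0 count_rep)
      also have "\<dots> = m k" using n_ge by simp
      finally show "norm ((X n ^^ k) u) \<le> C * A ^ k * m k"
        using AC(3)[rule_format, OF a] by (simp add: opword_replicate)
    qed (use AC in auto)
    ultimately show "u \<in> S_class (n - 1) X (\<lambda>_. m) \<inter> S_single (X n) m" by blast
  next
    assume "u \<in> S_class (n - 1) X (\<lambda>_. m) \<inter> S_single (X n) m"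
    then obtain A1 C1 A2 C2 where
      h1: "A1 > 0" "C1 > 0" "\<forall>\<alpha>\<in>multi_indices (n - 1).
        norm (opword X \<alpha> u) \<le> C1 * A1 ^ length \<alpha> * seq_weight (n - 1) (\<lambda>_. m) \<alpha>"
      and h2: "A2 > 0" "C2 > 0" "\<forall>k\<ge>1. norm ((X n ^^ k) u) \<le> C2 * A2 ^ k * m k"
      unfolding S_class_def S_single_def by blast
    define A where "A = max (max A1 A2) 1"
    define Cx where "Cx = max C1 (norm u)"
    define Cy where "Cy = max C2 (norm u)"
    have A1': "A \<ge> 1" by (simp add: A_def)
    have Cx: "Cx > 0" using h1 by (simp add: Cx_def)
    have Cy: "Cy > 0" using h2 by (simp add: Cy_def)
    have bX: "norm (opword X \<beta> u) \<le> Cx * (A ^ length \<beta> * m (length \<beta>))" if b: "set \<beta> \<subseteq> {1..n-1}" for \<beta>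
    proof (cases "\<beta> = []")
      case True then show ?thesis by (simp add: Cx_def m0)
    next
      case False
      hence a: "\<beta> \<in> multi_indices (n - 1)" using b by (simp add: multi_indices_def)
      have sw: "seq_weight (n - 1) (\<lambda>_. m) \<beta> \<le> m (length \<beta>)"
      proof -
        have "seq_weight (n - 1) (\<lambda>_. m) \<beta> \<le> m (\<Sum>j\<in>{1..n-1}. count_list \<beta> j)"
          unfolding seq_weight_def by (rule prod_le_m[OF m_pos A1 m0]) simp
        also have "(\<Sum>j\<in>{1..n-1}. count_list \<beta> j) = length \<beta>" using b by (simp add: sum_count_set)
        finally show ?thesis .
      qed
      have sw0: "seq_weight (n - 1) (\<lambda>_. m) \<beta> \<ge> 0"
        unfolding seq_weight_def using mnn by (intro prod_nonneg) auto
      have "norm (opword X \<beta> u) \<le> C1 * A1 ^ length \<beta> * seq_weight (n - 1) (\<lambda>_. m) \<beta>" using h1 a by blast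
      also have "\<dots> \<le> Cx * A ^ length \<beta> * m (length \<beta>)"
        using h1 sw sw0 by (intro mult_mono power_mono) (auto simp: Cx_def A_def)
      finally show ?thesis by (simp add: mult.assoc)
    qed
    have bY: "norm ((X n ^^ k) u) \<le> Cy * (A ^ k * m k)" for k
    proof (cases "k = 0")
      case True then show ?thesis by (simp add: Cy_def m0)
    next
      case False
      have "norm ((X n ^^ k) u) \<le> C2 * A2 ^ k * m k" using h2 False by simp
      also have "\<dots> \<le> Cy * A ^ k * m k"
        using h2 mnn by (intro mult_mono power_mono) (auto simp: Cy_def A_def)
      finally show ?thesis by (simp add: mult.assoc)
    qed
    define mt where "mt j = A ^ j * m j" for j
    have mtpos: "\<forall>k. mt k > 0" using m_pos A1' by (simp add: mt_def)
    have mtnn: "\<forall>k. mt k \<ge> 0" using mtpos by (auto intro: less_imp_le)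
    have mtA3: "\<forall>p\<ge>1. real p * mt (p - 1) \<le> L * mt p"
    proof (intro allI impI)
      fix p :: nat assume p: "p \<ge> 1"
      have "real p * mt (p - 1) = A ^ (p - 1) * (real p * m (p - 1))" by (simp add: mt_def)
      also have "\<dots> \<le> A ^ (p - 1) * (L * m p)" using L(2) p A1' by (intro mult_left_mono) auto
      also have "\<dots> \<le> A ^ p * (L * m p)"
        using A1' L(1) mnn by (intro mult_right_mono power_increasing) auto
      finally show "real p * mt (p - 1) \<le> L * mt p" by (simp add: mt_def mult_ac)
    qed
    define E where "E = exp (kap * L)"
    have E1: "E \<ge> 1" using kap_nonneg L(1) by (simp add: E_def)
    have PE: "\<forall>k M. k \<le> M \<longrightarrow> Pb mt kap k M \<le> E * mt M"
      unfolding E_def using Pb_bound[OF mtpos L(1) mtA3 kap_nonneg] by blast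
    have tb: "\<forall>k \<beta>. set \<beta> \<subseteq> {1..n-1} \<longrightarrow> cmod (cinner u ((X n ^^ k) (opword X \<beta> u))) \<le> (Cx * Cy) * mt (k + length \<beta>)"
    proof (intro allI impI)
      fix k \<beta> assume b: "set \<beta> \<subseteq> {1..n-1}"
      have v: "opword X \<beta> u \<in> D" using opwordD[OF set_sub[OF b] uD] .
      obtain e where e: "cmod e = 1" "cinner (opword X (replicate k n) u) (opword X \<beta> u)
          = e * cinner u (opword X (rev (replicate k n)) (opword X \<beta> u))"
      proof -
        have rs: "set (replicate k n) \<subseteq> {1..n}" using nin by (cases k) auto
        show ?thesis using adj_word[OF herm uD rs v] that by auto
      qed
      have "cmod (cinner u ((X n ^^ k) (opword X \<beta> u))) = cmod (cinner ((X n ^^ k) u) (opword X \<beta> u))"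
        using e by (simp add: opword_replicate norm_mult)
      also have "\<dots> \<le> norm ((X n ^^ k) u) * norm (opword X \<beta> u)" by (rule cauchy_schwarz_c)
      also have "\<dots> \<le> (Cy * (A ^ k * m k)) * (Cx * (A ^ length \<beta> * m (length \<beta>)))"
        using bY bX[OF b] Cy A1' mnn by (intro mult_mono) (auto intro!: mult_nonneg_nonneg less_imp_le)
      also have "\<dots> = (Cx * Cy) * (A ^ (k + length \<beta>) * (m k * m (length \<beta>)))"
        by (simp add: power_add algebra_simps)
      also have "\<dots> \<le> (Cx * Cy) * (A ^ (k + length \<beta>) * m (k + length \<beta>))"
        using Cx Cy A1' superadd[OF m_pos A1 m0, of k "length \<beta>"] by (intro mult_left_mono) auto
      finally show "cmod (cinner u ((X n ^^ k) (opword X \<beta> u))) \<le> (Cx * Cy) * mt (k + length \<beta>)"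
        by (simp add: mt_def)
    qed
    show "u \<in> S_class n X (\<lambda>_. m)"
      unfolding S_class_def
    proof (intro CollectI exI conjI ballI)
      fix \<alpha> assume a: "\<alpha> \<in> multi_indices n"
      have as: "set \<alpha> \<subseteq> {1..n}" using a by (simp add: multi_indices_def)
      define N where "N = length \<alpha>"
      obtain R where R: "nrm R" "\<forall>x\<in>D. ev R x = opword X (rev \<alpha> @ \<alpha>) x"
        "\<forall>s. mass mt s R \<le> E ^ length (rev \<alpha> @ \<alpha>) * mt (length (rev \<alpha> @ \<alpha>) + s)"
        using lemW[OF mtnn E1 PE, of "rev \<alpha> @ \<alpha>"] as by auto
      obtain e where e: "cmod e = 1" "cinner (opword X \<alpha> u) (opword X \<alpha> u) = e * cinner u (opword X (rev \<alpha>) (opword X \<alpha> u))"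
        using adj_word[OF herm uD as opwordD[OF as uD]] by blast
      have "(norm (opword X \<alpha> u))^2 = cmod (cinner (opword X \<alpha> u) (opword X \<alpha> u))"
        unfolding cinner_self norm_of_real by (simp only: norm_of_real abs_of_nonneg zero_le_power2)
      also have "\<dots> = cmod (cinner u (ev R u))"
        using e R(2) uD by (simp add: norm_mult opword_append)
      also have "\<dots> \<le> (Cx * Cy) * mass mt 0 R" by (rule inner_ev[OF uD tb R(1)])
      also have "\<dots> \<le> (Cx * Cy) * (E ^ (2 * N) * mt (2 * N))"
        using R(3)[rule_format, of 0] Cx Cy by (intro mult_left_mono) (auto simp: N_def mult_2)
      also have "\<dots> = (Cx * Cy) * (E ^ (2 * N) * A ^ (2 * N) * m (N + N))" by (simp add: mt_def mult_2)
      also have "\<dots> \<le> (Cx * Cy) * (E ^ (2 * N) * A ^ (2 * N) * (H' ^ (N + N) * m N * m N))"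
        using A2'[rule_format, of N N] Cx Cy E1 A1' by (intro mult_left_mono) auto
      also have "\<dots> = (sqrt (Cx * Cy) * (E * A * H') ^ N * m N)^2"
      proof -
        define sq where "sq = sqrt (Cx * Cy)"
        have ss: "Cx * Cy = sq * sq" using Cx Cy by (simp add: sq_def)
        have sq0: "sq \<ge> 0" using Cx Cy by (simp add: sq_def)
        have p2: "\<And>x::real. x ^ (2 * N) = x ^ N * x ^ N" by (simp add: mult_2 power_add)
        show ?thesis unfolding ss sq_def[symmetric] power2_eq_square p2
          using sq0 by (simp add: power_add power_mult_distrib mult_ac)
      qed
      finally have sq: "(norm (opword X \<alpha> u))^2 \<le> (sqrt (Cx * Cy) * (E * A * H') ^ N * m N)^2" .
      have nn: "0 \<le> sqrt (Cx * Cy) * (E * A * H') ^ N * m N" using Cx Cy E1 A1' H'1 mnn by simp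
      have b1: "norm (opword X \<alpha> u) \<le> sqrt (Cx * Cy) * (E * A * H') ^ N * m N"
        using power2_le_imp_le[OF sq nn] .
      have mN: "m N \<le> H' ^ (n * N) * seq_weight n (\<lambda>_. m) \<alpha>"
      proof -
        have "m (\<Sum>j\<in>{1..n}. count_list \<alpha> j) \<le> H' ^ (card {1..n} * (\<Sum>j\<in>{1..n}. count_list \<alpha> j)) * (\<Prod>j\<in>{1..n}. m (count_list \<alpha> j))"
          by (rule m_le_prod[OF m_pos H'1 A2' m0]) simp
        moreover have "(\<Sum>j\<in>{1..n}. count_list \<alpha> j) = N" using as by (simp add: sum_count_set N_def)
        ultimately show ?thesis by (simp add: seq_weight_def)
      qed
      have "norm (opword X \<alpha> u) \<le> sqrt (Cx * Cy) * (E * A * H') ^ N * (H' ^ (n * N) * seq_weight n (\<lambda>_. m) \<alpha>)"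
        using b1 mN Cx Cy E1 A1' H'1 by (smt (verit) mult_left_mono mult_nonneg_nonneg real_sqrt_ge_zero zero_le_power)
      also have "\<dots> = sqrt (Cx * Cy) * (E * A * H' * H' ^ n) ^ length \<alpha> * seq_weight n (\<lambda>_. m) \<alpha>"
        by (simp add: N_def power_mult_distrib power_mult mult.commute mult.left_commute)
      finally show "norm (opword X \<alpha> u) \<le> sqrt (Cx * Cy) * (E * A * H' * H' ^ n) ^ length \<alpha> * seq_weight n (\<lambda>_. m) \<alpha>" .
    qed (use Cx Cy E1 A1' H'1 in auto)
  qed
qed


end
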